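(* Let $\triangle ABC$ be a nondegenerate triangle circumscribed about a central conic with semi-axes $a$ and $b$, $a$ being the semi-axis along the focal axis, one of whose foci coincides with the circumcenter of $\triangle ABC$. Let $H$ be the orthocenter of $\triangle ABC$. Then $|AH|\,|BH|\,|CH|=8ab^2$.
   Context: A central conic is a non-degenerate ellipse or hyperbola. For a hyperbola, $a$ is the semi-transverse axis and $b$ the semi-conjugate axis, so that $a^2+b^2=c^2$ with $c$ half the focal distance. A triangle is circumscribed about a conic if each of its three sidelines is tangent to the conic. *)

theory Defs
  imports "HOL-Analysis.Analysis"
begin

text \<open>A central conic in the Euclidean plane (real^2), given by its center Z,
  a unit vector u along the focal axis, the semi-axis a along the focal axis,
  the other semi-axis b, and a flag hyp (False = ellipse, True = hyperbola).
  Writing x = (P-Z).u and y = (P-Z).v for a unit vector v orthogonal to u,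
  we have y^2 = |P-Z|^2 - x^2, so the conic is
  x^2/a^2 + y^2/b^2 = 1 (ellipse) or x^2/a^2 - y^2/b^2 = 1 (hyperbola).\<close>

definition conic_eq :: "bool \<Rightarrow> real \<Rightarrow> real \<Rightarrow> real^2 \<Rightarrow> real^2 \<Rightarrow> real^2 \<Rightarrow> real" where
  "conic_eq hyp a b Z u P =
     ((P - Z) \<bullet> u)\<^sup>2 / a\<^sup>2
     + (if hyp then -1 else 1) * ((norm (P - Z))\<^sup>2 - ((P - Z) \<bullet> u)\<^sup>2) / b\<^sup>2 - 1"

definition central_conic :: "bool \<Rightarrow> real \<Rightarrow> real \<Rightarrow> real^2 \<Rightarrow> real^2 \<Rightarrow> bool" where
  "central_conic hyp a b Z u \<longleftrightarrow> a > 0 \<and> b > 0 \<and> norm u = 1 \<and> (\<not> hyp \<longrightarrow> b \<le> a)"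

definition focal_c :: "bool \<Rightarrow> real \<Rightarrow> real \<Rightarrow> real" where
  "focal_c hyp a b = sqrt (if hyp then a\<^sup>2 + b\<^sup>2 else a\<^sup>2 - b\<^sup>2)"

definition conic_foci :: "bool \<Rightarrow> real \<Rightarrow> real \<Rightarrow> real^2 \<Rightarrow> real^2 \<Rightarrow> (real^2) set" where
  "conic_foci hyp a b Z u = {Z + focal_c hyp a b *\<^sub>R u, Z - focal_c hyp a b *\<^sub>R u}"

definition tangent_line :: "bool \<Rightarrow> real \<Rightarrow> real \<Rightarrow> real^2 \<Rightarrow> real^2 \<Rightarrow> real^2 \<Rightarrow> real^2 \<Rightarrow> bool" where
  "tangent_line hyp a b Z u X Y \<longleftrightarrow> X \<noteq> Y \<and>
     (\<exists>P D. P \<in> {X + t *\<^sub>R (Y - X) | t. True} \<and> conic_eq hyp a b Z u P = 0 \<and>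
        (conic_eq hyp a b Z u has_derivative D) (at P) \<and> D (Y - X) = 0)"

definition circumscribed :: "bool \<Rightarrow> real \<Rightarrow> real \<Rightarrow> real^2 \<Rightarrow> real^2 \<Rightarrow> real^2 \<Rightarrow> real^2 \<Rightarrow> real^2 \<Rightarrow> bool" where
  "circumscribed hyp a b Z u A B C \<longleftrightarrow>
     tangent_line hyp a b Z u A B \<and> tangent_line hyp a b Z u B C \<and> tangent_line hyp a b Z u C A"

definition is_circumcenter :: "real^2 \<Rightarrow> real^2 \<Rightarrow> real^2 \<Rightarrow> real^2 \<Rightarrow> bool" where
  "is_circumcenter O' A B C \<longleftrightarrow> dist O' A = dist O' B \<and> dist O' B = dist O' C"

definition is_orthocenter :: "real^2 \<Rightarrow> real^2 \<Rightarrow> real^2 \<Rightarrow> real^2 \<Rightarrow> bool" where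
  "is_orthocenter H A B C \<longleftrightarrow>
     (H - A) \<bullet> (B - C) = 0 \<and> (H - B) \<bullet> (C - A) = 0 \<and> (H - C) \<bullet> (A - B) = 0"

end

theory Submission
  imports Defs
begin

lemma inner2: "(x::real^2) \<bullet> y = x$1*y$1 + x$2*y$2"
  by (simp add: inner_vec_def sum_2)

lemma det0:
  fixes d1 d2 g1 g2 w1 w2 :: real
  assumes "d1*g1 + d2*g2 = 0" "d1*w1 + d2*w2 = 0" "d1 \<noteq> 0 \<or> d2 \<noteq> 0"
  shows "g1*w2 - g2*w1 = 0"
proof -
  have "d1*(g1*w2 - g2*w1) = w2*(d1*g1+d2*g2) - g2*(d1*w1+d2*w2)" by algebra
  moreover have "d2*(g1*w2 - g2*w1) = g1*(d1*w1+d2*w2) - w1*(d1*g1+d2*g2)" by algebra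
  ultimately show ?thesis using assms by auto
qed

lemma perp2:
  fixes d g w :: "real^2"
  assumes "d \<noteq> 0" "g \<bullet> d = 0" "w \<bullet> d = 0"
  shows "(g \<bullet> g) *\<^sub>R w = (w \<bullet> g) *\<^sub>R g"
proof -
  have d: "d$1 \<noteq> 0 \<or> d$2 \<noteq> 0" using assms(1) by (metis exhaust_2 vec_eq_iff zero_index)
  have e1: "d$1*g$1 + d$2*g$2 = 0" "d$1*w$1 + d$2*w$2 = 0" using assms(2,3) by (auto simp: inner2 mult.commute)
  have det: "g$1*w$2 - g$2*w$1 = 0" using det0[OF e1 d] .
  have c1: "(g$1*g$1+g$2*g$2)*w$1 = (w$1*g$1+w$2*g$2)*g$1"
  proof -
    have "(g$1*g$1+g$2*g$2)*w$1 - (w$1*g$1+w$2*g$2)*g$1 = - g$2 * (g$1*w$2 - g$2*w$1)" by algebra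
    then show ?thesis using det by simp
  qed
  have c2: "(g$1*g$1+g$2*g$2)*w$2 = (w$1*g$1+w$2*g$2)*g$2"
  proof -
    have "(g$1*g$1+g$2*g$2)*w$2 - (w$1*g$1+w$2*g$2)*g$2 = g$1 * (g$1*w$2 - g$2*w$1)" by algebra
    then show ?thesis using det by simp
  qed
  show ?thesis unfolding vec_eq_iff forall_2 using c1 c2 by (simp add: inner2)
qed

lemma conic_eq_alt: "conic_eq hyp a b Z u = (\<lambda>Q. ((Q - Z) \<bullet> u)\<^sup>2 / a\<^sup>2
     + (if hyp then -1 else 1) * ((Q - Z) \<bullet> (Q - Z) - ((Q - Z) \<bullet> u)\<^sup>2) / b\<^sup>2 - 1)"
  by (auto simp: conic_eq_def power2_norm_eq_inner fun_eq_iff)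

lemma conic_deriv:
  "(conic_eq hyp a b Z u has_derivative (\<lambda>h. (2*((P-Z)\<bullet>u)*(h\<bullet>u)) / a\<^sup>2
     + (if hyp then -1 else 1) * (2 * ((P-Z)\<bullet>h) - 2*((P-Z)\<bullet>u)*(h\<bullet>u)) / b\<^sup>2)) (at P)"
proof -
  define s :: real where "s = (if hyp then -1 else 1)"
  have e: "conic_eq hyp a b Z u = (\<lambda>Q. ((Q-Z)\<bullet>u)*((Q-Z)\<bullet>u) * (1/a\<^sup>2) + s*((Q-Z)\<bullet>(Q-Z) - ((Q-Z)\<bullet>u)*((Q-Z)\<bullet>u)) * (1/b\<^sup>2) - 1)"
    unfolding conic_eq_alt s_def by (auto simp: fun_eq_iff power2_eq_square)
  show ?thesis unfolding e s_def[symmetric]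
    apply (rule has_derivative_eq_rhs)
     apply (rule derivative_intros)+
    apply (auto simp: fun_eq_iff algebra_simps inner_commute diff_divide_distrib add_divide_distrib)
    done
qed

lemma alg:
  fixes a b q w c x N alp bet GG k :: real
  assumes a: "a > 0" "b > 0" and qq: "q*q = 1" and ww: "w*w = 1" and cc: "c*c = a\<^sup>2 - q*b\<^sup>2"
    and con: "x\<^sup>2/a\<^sup>2 + q*(N - x\<^sup>2)/b\<^sup>2 = 1"
    and al: "alp = 2*x/a\<^sup>2 - 2*q*x/b\<^sup>2" and be: "bet = 2*q/b\<^sup>2"
    and GG: "GG = alp*alp + 2*alp*bet*x + bet*bet*N"
    and k: "k = w*c*(2*x/a\<^sup>2) - 2"
  shows "GG*c*c - 2*w*c*(2*x/a\<^sup>2)*k + k*k = a\<^sup>2 * GG"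
    and "k * (- w*c*(2*x/a\<^sup>2) - 2) = q*b\<^sup>2*GG"
proof -
  define z where "z = x/a\<^sup>2"
  define nn where "nn = 1/b\<^sup>2"
  have za: "z*a\<^sup>2 = x" using a by (simp add: z_def)
  have vb: "nn*b\<^sup>2 = 1" using a by (simp add: nn_def)
  have con2: "x*z + q*(N - x\<^sup>2)*nn = 1" using con by (simp add: z_def nn_def power2_eq_square)
  have Nx: "N - x\<^sup>2 = q*b\<^sup>2*(1 - x*z)"
  proof -
    have "q*(N - x\<^sup>2)*nn*b\<^sup>2 = (1 - x*z)*b\<^sup>2" using con2 by (metis add_diff_cancel_left')
    then have "q*(N - x\<^sup>2) = (1 - x*z)*b\<^sup>2" using vb by (metis mult.assoc mult.right_neutral)
    then have "q*q*(N - x\<^sup>2) = q*(1 - x*z)*b\<^sup>2" by (metis mult.assoc)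
    then show ?thesis using qq by simp
  qed
  have al2: "alp = 2*z - 2*q*x*nn" using al by (simp add: z_def nn_def)
  have be2: "bet = 2*q*nn" using be by (simp add: nn_def)
  have G1: "GG = (alp + bet*x)*(alp+bet*x) + bet*bet*(N - x\<^sup>2)" unfolding GG by (simp add: algebra_simps power2_eq_square)
  have G2: "alp + bet*x = 2*z" using al2 be2 by simp
  have G3: "bet*bet*(N - x\<^sup>2) = 4*q*nn*(1 - x*z)"
  proof -
    have "bet*bet*(N - x\<^sup>2) = 4*(q*q)*q*(nn*(nn*b\<^sup>2))*(1-x*z)" unfolding be2 Nx by algebra
    then show ?thesis using qq vb by simp
  qed
  have GGf: "GG = 4*z*z + 4*q*nn*(1 - x*z)" using G1 G2 G3 by simp
  have k2: "k = 2*w*c*z - 2" using k by (simp add: z_def)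
  have e1: "- 2*w*c*(2*z)*k + k*k = 4 - 4*(c*c)*z*z"
  proof -
    have "- 2*w*c*(2*z)*k + k*k = 4 - 4*(w*w)*(c*c)*z*z" unfolding k2 by algebra
    then show ?thesis using ww by simp
  qed
  have e2: "(c*c - a\<^sup>2)*GG = -4*q*b\<^sup>2*z*z - 4*(1 - x*z)"
  proof -
    have "(c*c - a\<^sup>2)*GG = -4*q*b\<^sup>2*z*z - 4*(q*q)*(nn*b\<^sup>2)*(1 - x*z)" unfolding GGf cc by algebra
    then show ?thesis using qq vb by simp
  qed
  have e3: "x*z = z*z*(c*c + q*b\<^sup>2)" using za cc by (simp add: algebra_simps power2_eq_square)
  show "GG*c*c - 2*w*c*(2*x/a\<^sup>2)*k + k*k = a\<^sup>2 * GG"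
  proof -
    have "GG*c*c - 2*w*c*(2*x/a\<^sup>2)*k + k*k - a\<^sup>2 * GG = (c*c - a\<^sup>2)*GG + (- 2*w*c*(2*z)*k + k*k)"
      by (simp add: z_def algebra_simps)
    also have "\<dots> = 0" unfolding e1 e2 using e3 by (simp add: algebra_simps)
    finally show ?thesis by simp
  qed
  show "k * (- w*c*(2*x/a\<^sup>2) - 2) = q*b\<^sup>2*GG"
  proof -
    have "k * (- w*c*(2*x/a\<^sup>2) - 2) = k*(-w*c*(2*z) - 2)" by (simp add: z_def)
    also have "\<dots> = 4 - 4*(w*w)*(c*c)*z*z" unfolding k2 by algebra
    also have "\<dots> = 4 - 4*(c*c)*z*z" using ww by simp
    also have "\<dots> = q*b\<^sup>2*GG"
    proof -
      have "q*b\<^sup>2*GG = 4*q*b\<^sup>2*z*z + 4*(q*q)*(nn*b\<^sup>2)*(1 - x*z)" unfolding GGf by algebra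
      then show ?thesis using qq vb e3 by (simp add: algebra_simps)
    qed
    finally show ?thesis .
  qed
qed

lemma tangent_facts:
  fixes X Y Z u F M :: "real^2"
  assumes cc: "central_conic hyp a b Z u" and tl: "tangent_line hyp a b Z u X Y"
    and F: "F = Z + (w * focal_c hyp a b) *\<^sub>R u" and ww: "w*w = 1"
    and Ml: "M = X + t *\<^sub>R (Y - X)" and perp: "(M - F) \<bullet> (Y - X) = 0"
  shows "(M - Z) \<bullet> (M - Z) = a\<^sup>2"
    and "(F - M) \<bullet> (2 *\<^sub>R Z - F - M) = (if hyp then -1 else 1) * b\<^sup>2"
proof -
  define q :: real where "q = (if hyp then -1 else 1)"
  define c where "c = focal_c hyp a b"
  have a: "a > 0" "b > 0" and uu: "u \<bullet> u = 1" and ba: "\<not> hyp \<Longrightarrow> b \<le> a"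
    using cc by (auto simp: central_conic_def norm_eq_1)
  have qq: "q*q = 1" by (simp add: q_def)
  have c2: "c*c = a\<^sup>2 - q*b\<^sup>2"
  proof (cases hyp)
    case True
    have "0 \<le> a\<^sup>2 + b\<^sup>2" by simp
    then show ?thesis using True by (simp add: c_def focal_c_def q_def)
  next
    case False
    have "b\<^sup>2 \<le> a\<^sup>2" using ba[OF False] a by (simp add: power_mono)
    then have "0 \<le> a\<^sup>2 - b\<^sup>2" by simp
    then show ?thesis using False by (simp add: c_def focal_c_def q_def)
  qed
  obtain P D t0 where P: "P = X + t0 *\<^sub>R (Y - X)" "conic_eq hyp a b Z u P = 0"
     "(conic_eq hyp a b Z u has_derivative D) (at P)" "D (Y - X) = 0" and XY: "X \<noteq> Y"
    using tl unfolding tangent_line_def by blast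
  define d where "d = Y - X"
  have d0: "d \<noteq> 0" using XY by (simp add: d_def)
  define p where "p = P - Z"
  define x where "x = p \<bullet> u"
  define N where "N = p \<bullet> p"
  have con: "x\<^sup>2/a\<^sup>2 + q*(N - x\<^sup>2)/b\<^sup>2 = 1"
    using P(2) by (simp add: conic_eq_alt q_def p_def x_def N_def)
  define alp where "alp = 2*x/a\<^sup>2 - 2*q*x/b\<^sup>2"
  define bet where "bet = 2*q/b\<^sup>2"
  define g where "g = alp *\<^sub>R u + bet *\<^sub>R p"
  have Dh: "D h = g \<bullet> h" for h
  proof -
    have "D = (\<lambda>h. (2*((P-Z)\<bullet>u)*(h\<bullet>u)) / a\<^sup>2
     + (if hyp then -1 else 1) * (2 * ((P-Z)\<bullet>h) - 2*((P-Z)\<bullet>u)*(h\<bullet>u)) / b\<^sup>2)"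
      using has_derivative_unique[OF P(3) conic_deriv] .
    then show ?thesis
      by (simp add: g_def alp_def bet_def q_def[symmetric] p_def[symmetric] x_def[symmetric]
          inner_add_left inner_commute algebra_simps diff_divide_distrib add_divide_distrib)
  qed
  have gd: "g \<bullet> d = 0" using P(4) Dh d_def by simp
  have gp: "g \<bullet> p = 2"
  proof -
    have "g \<bullet> p = alp * x + bet * N" by (simp add: g_def inner_add_left inner_add_right x_def N_def inner_commute)
    also have "\<dots> = 2 * (x\<^sup>2/a\<^sup>2 + q*(N - x\<^sup>2)/b\<^sup>2)"
      by (simp add: alp_def bet_def algebra_simps power2_eq_square diff_divide_distrib add_divide_distrib)
    finally show ?thesis using con by simp
  qed
  have gu: "g \<bullet> u = 2*x/a\<^sup>2"
  proof -
    have "g \<bullet> u = alp + bet * x" by (simp add: g_def inner_add_left x_def uu)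
    then show ?thesis by (simp add: alp_def bet_def)
  qed
  have gg: "g \<bullet> g = alp*alp + 2*alp*bet*x + bet*bet*N"
    by (simp add: g_def inner_add_left inner_add_right x_def N_def uu inner_commute algebra_simps)
  define GG where "GG = g \<bullet> g"
  have g0: "g \<noteq> 0" using gp by auto
  have GG0: "GG \<noteq> 0" using g0 by (simp add: GG_def)
  define k where "k = w*c*(2*x/a\<^sup>2) - 2"
  have alg1: "GG*c*c - 2*w*c*(2*x/a\<^sup>2)*k + k*k = a\<^sup>2 * GG"
   and alg2: "k * (- w*c*(2*x/a\<^sup>2) - 2) = q*b\<^sup>2*GG"
    using alg[OF a qq ww c2 con alp_def bet_def gg[folded GG_def] k_def] by auto
  have FZ: "F - Z = (w*c) *\<^sub>R u" using F c_def by simp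
  have MP: "M - P = (t - t0) *\<^sub>R d" unfolding Ml P(1) d_def by (simp add: algebra_simps)
  have gMP: "g \<bullet> (M - P) = 0" using MP gd by simp
  have MFd: "(M - F) \<bullet> d = 0" using perp d_def by simp
  have pr: "GG *\<^sub>R (M - F) = ((M - F) \<bullet> g) *\<^sub>R g"
    using perp2[OF d0 gd MFd] GG_def by simp
  have MFg: "(M - F) \<bullet> g = - k"
  proof -
    have eqMF: "M - F = (M - P) + p - (w*c) *\<^sub>R u" using FZ by (simp add: p_def algebra_simps)
    have "(M - F) \<bullet> g = ((M - P) + p - (w*c) *\<^sub>R u) \<bullet> g" by (simp only: eqMF)
    also have "\<dots> = g \<bullet> (M - P) + g \<bullet> p - (w*c) * (g \<bullet> u)"
      by (simp add: inner_diff_left inner_add_left inner_diff_right inner_add_right inner_commute)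
    finally have "(M - F) \<bullet> g = g \<bullet> (M - P) + g \<bullet> p - (w*c) * (g \<bullet> u)" .
    then show ?thesis using gMP gp gu k_def by simp
  qed
  have pr2: "GG *\<^sub>R (M - F) = (- k) *\<^sub>R g" using pr MFg by simp
  have MZ: "GG *\<^sub>R (M - Z) = (GG*w*c) *\<^sub>R u - k *\<^sub>R g"
  proof -
    have "GG *\<^sub>R (M - Z) = GG *\<^sub>R (M - F) + GG *\<^sub>R (F - Z)" by (simp add: algebra_simps)
    then show ?thesis using pr2 FZ by simp
  qed
  have "(GG*GG) * ((M - Z) \<bullet> (M - Z)) = (GG *\<^sub>R (M - Z)) \<bullet> (GG *\<^sub>R (M - Z))" by simp
  also have "\<dots> = GG*GG*(w*w)*c*c - 2*GG*w*c*k*(g \<bullet> u) + k*k*GG"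
    unfolding MZ by (simp add: inner_diff_left inner_diff_right uu GG_def inner_commute algebra_simps)
  also have "\<dots> = GG * (GG*c*c - 2*w*c*(2*x/a\<^sup>2)*k + k*k)" using ww gu by (simp add: algebra_simps)
  also have "\<dots> = GG*GG*a\<^sup>2" using alg1 by simp
  finally show "(M - Z) \<bullet> (M - Z) = a\<^sup>2" using GG0 by simp
  have "GG * ((F - M) \<bullet> (2 *\<^sub>R Z - F - M)) = (GG *\<^sub>R (F - M)) \<bullet> (2 *\<^sub>R Z - F - M)" by simp
  also have "\<dots> = k * (g \<bullet> (2 *\<^sub>R Z - F - M))"
  proof -
    have "GG *\<^sub>R (F - M) = k *\<^sub>R g" using pr2 by (metis minus_diff_eq scaleR_minus_left scaleR_minus_right minus_minus)
    then show ?thesis by simp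
  qed
  also have "g \<bullet> (2 *\<^sub>R Z - F - M) = - w*c*(2*x/a\<^sup>2) - 2"
  proof -
    have "2 *\<^sub>R Z - F - M = - (F - Z) - p - (M - P)" by (simp add: p_def algebra_simps scaleR_2)
    then have "g \<bullet> (2 *\<^sub>R Z - F - M) = - (w*c)*(g \<bullet> u) - g \<bullet> p - g \<bullet> (M - P)"
      by (simp add: FZ inner_diff_right inner_minus_right)
    then show ?thesis using gMP gp gu by simp
  qed
  also have "k * (- w*c*(2*x/a\<^sup>2) - 2) = GG * (q*b\<^sup>2)" using alg2 by simp
  finally show "(F - M) \<bullet> (2 *\<^sub>R Z - F - M) = (if hyp then -1 else 1) * b\<^sup>2"
    using GG0 q_def by simp
qed

lemma noncol_perp:
  fixes A B C w :: "real^2"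
  assumes nc: "\<not> collinear {A, B, C}" and h1: "w \<bullet> (B - A) = 0" and h2: "w \<bullet> (C - A) = 0"
  shows "w = 0"
proof (rule ccontr)
  assume w0: "w \<noteq> 0"
  have e1: "(B - A) \<bullet> w = 0" "(C - A) \<bullet> w = 0" using h1 h2 by (simp_all add: inner_commute)
  have pr: "((B - A) \<bullet> (B - A)) *\<^sub>R (C - A) = ((C - A) \<bullet> (B - A)) *\<^sub>R (B - A)"
    using perp2[OF w0 e1] .
  have BA: "B \<noteq> A" using nc by auto
  then have nz: "(B - A) \<bullet> (B - A) \<noteq> 0" by simp
  define l where "l = ((C - A) \<bullet> (B - A)) / ((B - A) \<bullet> (B - A))"
  have "C - A = l *\<^sub>R (B - A)"
  proof -
    have "C - A = (1 / ((B - A) \<bullet> (B - A))) *\<^sub>R (((B - A) \<bullet> (B - A)) *\<^sub>R (C - A))" using nz by simp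
    also have "\<dots> = l *\<^sub>R (B - A)" unfolding pr l_def by simp
    finally show ?thesis .
  qed
  then have "C = l *\<^sub>R B + (1 - l) *\<^sub>R A" by (simp add: algebra_simps)
  then have "collinear {B, C, A}" unfolding collinear_3_expand by blast
  then show False using nc by (simp add: insert_commute)
qed

lemma gram0:
  fixes x1 x2 y1 y2 z1 z2 :: real
  shows "(x1*x1+x2*x2) * (y1*y1+y2*y2) * (z1*z1+z2*z2) + 2 * (x1*y1+x2*y2) * (y1*z1+y2*z2) * (z1*x1+z2*x2)
    - (x1*x1+x2*x2) * (y1*z1+y2*z2)^2 - (y1*y1+y2*y2) * (z1*x1+z2*x2)^2 - (z1*z1+z2*z2) * (x1*y1+x2*y2)^2 = 0"
  by (simp add: algebra_simps power2_eq_square)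
lemma mp: fixes X Y F :: "real^2" shows "(X + (1/2) *\<^sub>R (Y - X)) - F = (1/2) *\<^sub>R ((X - F) + (Y - F))"
  unfolding vec_eq_iff by (simp add: field_simps)
lemma hp: fixes U V :: "real^2" shows "((1/2) *\<^sub>R (U + V)) \<bullet> (V - U) = (V \<bullet> V - U \<bullet> U) / 2"
proof -
  have "(V - U) \<bullet> (U + V) = (V \<bullet> U - U \<bullet> V) + V \<bullet> V - U \<bullet> U"
    by (simp add: inner_diff_left inner_add_right)
  also have "V \<bullet> U - U \<bullet> V = 0" by (simp add: inner_commute)
  finally have "(V - U) \<bullet> (U + V) = V \<bullet> V - U \<bullet> U" by simp
  then show ?thesis by (simp add: inner_commute)
qed
lemma gram2:
  fixes x y z :: "real^2"
  shows "(x \<bullet> x) * (y \<bullet> y) * (z \<bullet> z) + 2 * (x \<bullet> y) * (y \<bullet> z) * (z \<bullet> x)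
    - (x \<bullet> x) * (y \<bullet> z)\<^sup>2 - (y \<bullet> y) * (z \<bullet> x)\<^sup>2 - (z \<bullet> z) * (x \<bullet> y)\<^sup>2 = 0"
  unfolding inner2 by (rule gram0)

lemma mid_perp:
  fixes F X Y :: "real^2"
  assumes "dist F X = dist F Y"
  shows "((X + (1/2) *\<^sub>R (Y - X)) - F) \<bullet> (Y - X) = 0"
proof -
  have "(X - F) \<bullet> (X - F) = (Y - F) \<bullet> (Y - F)"
    using assms by (metis dist_commute dist_norm power2_norm_eq_inner)
  moreover have "Y - X = (Y - F) - (X - F)" by simp
  ultimately show ?thesis unfolding mp using hp[of "X - F" "Y - F"] by simp
qed

lemma final_alg:
  fixes rr p1 p2 p3 :: real
  assumes "rr^3 + 2*p1*p2*p3 - rr*p1\<^sup>2 - rr*p2\<^sup>2 - rr*p3\<^sup>2 = 0"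
  shows "(2*rr+2*p1)*(2*rr+2*p2)*(2*rr+2*p3) = 16*rr*((p1+p2+p3+rr)/2)\<^sup>2"
proof -
  have "16*rr*((p1+p2+p3+rr)/2)\<^sup>2 - (2*rr+2*p1)*(2*rr+2*p2)*(2*rr+2*p3)
     = -4*(rr^3 + 2*p1*p2*p3 - rr*p1\<^sup>2 - rr*p2\<^sup>2 - rr*p3\<^sup>2)"
    by (simp add: algebra_simps power2_eq_square power3_eq_cube)
  then show ?thesis using assms by simp
qed

theorem corollary5p13:
  fixes A B C Z u F H :: "real^2" and a b :: real and hyp :: bool
  assumes "\<not> collinear {A, B, C}"
    and "central_conic hyp a b Z u"
    and "circumscribed hyp a b Z u A B C"
    and "F \<in> conic_foci hyp a b Z u"
    and "is_circumcenter F A B C"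
    and "is_orthocenter H A B C"
  shows "dist A H * dist B H * dist C H = 8 * a * b\<^sup>2"
proof -
  have ab: "a > 0" "b > 0" using assms(2) by (auto simp: central_conic_def)
  obtain w where ww: "w*w = 1" and Fw: "F = Z + (w * focal_c hyp a b) *\<^sub>R u"
  proof -
    have "F = Z + focal_c hyp a b *\<^sub>R u \<or> F = Z - focal_c hyp a b *\<^sub>R u"
      using assms(4) by (simp add: conic_foci_def)
    then show ?thesis
    proof
      assume "F = Z + focal_c hyp a b *\<^sub>R u" then show ?thesis using that[of 1] by simp
    next
      assume "F = Z - focal_c hyp a b *\<^sub>R u" then show ?thesis using that[of "-1"] by simp
    qed
  qed
  have tAB: "tangent_line hyp a b Z u A B" and tBC: "tangent_line hyp a b Z u B C"
    and tCA: "tangent_line hyp a b Z u C A" using assms(3) by (auto simp: circumscribed_def)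
  have dAB: "dist F A = dist F B" and dBC: "dist F B = dist F C" and dCA: "dist F C = dist F A"
    using assms(5) by (auto simp: is_circumcenter_def)
  define Mc where "Mc = A + (1/2) *\<^sub>R (B - A)"
  define Ma where "Ma = B + (1/2) *\<^sub>R (C - B)"
  define Mb where "Mb = C + (1/2) *\<^sub>R (A - C)"
  note tc = tangent_facts[OF assms(2) tAB Fw ww Mc_def mid_perp[OF dAB, folded Mc_def]]
  note ta = tangent_facts[OF assms(2) tBC Fw ww Ma_def mid_perp[OF dBC, folded Ma_def]]
  note tb = tangent_facts[OF assms(2) tCA Fw ww Mb_def mid_perp[OF dCA, folded Mb_def]]
  define x where "x = A - F"
  define y where "y = B - F"
  define z where "z = C - F"
  define rr where "rr = x \<bullet> x"
  have yy: "y \<bullet> y = rr" using dAB by (simp add: rr_def x_def y_def dist_norm norm_minus_commute power2_norm_eq_inner[symmetric])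
  have zz: "z \<bullet> z = rr" using dCA by (simp add: rr_def x_def z_def dist_norm norm_minus_commute power2_norm_eq_inner[symmetric])
  define Zd where "Zd = (Z - F) - (1/2) *\<^sub>R (x + y + z)"
  have McZ: "Mc - Z = (-(1/2)) *\<^sub>R z - Zd" unfolding Mc_def Zd_def x_def y_def z_def
    by (simp add: vec_eq_iff field_simps)
  have MaZ: "Ma - Z = (-(1/2)) *\<^sub>R x - Zd" unfolding Ma_def Zd_def x_def y_def z_def
    by (simp add: vec_eq_iff field_simps)
  have MbZ: "Mb - Z = (-(1/2)) *\<^sub>R y - Zd" unfolding Mb_def Zd_def x_def y_def z_def
    by (simp add: vec_eq_iff field_simps)
  have sq: "((-(1/2)) *\<^sub>R v - Zd) \<bullet> ((-(1/2)) *\<^sub>R v - Zd) = (1/4)*(v \<bullet> v) + v \<bullet> Zd + Zd \<bullet> Zd" for v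
    unfolding inner2 by (simp add: algebra_simps power2_eq_square)
  have e1: "a\<^sup>2 = rr/4 + z \<bullet> Zd + Zd \<bullet> Zd" using tc(1) McZ sq[of z] zz by simp
  have e2: "a\<^sup>2 = rr/4 + x \<bullet> Zd + Zd \<bullet> Zd" using ta(1) MaZ sq[of x] rr_def by simp
  have e3: "a\<^sup>2 = rr/4 + y \<bullet> Zd + Zd \<bullet> Zd" using tb(1) MbZ sq[of y] yy by simp
  have "Zd \<bullet> (B - A) = 0"
  proof -
    have "B - A = y - x" by (simp add: x_def y_def)
    then show ?thesis using e2 e3 by (simp add: inner_diff_right inner_commute)
  qed
  moreover have "Zd \<bullet> (C - A) = 0"
  proof -
    have "C - A = z - x" by (simp add: x_def z_def)
    then show ?thesis using e2 e1 by (simp add: inner_diff_right inner_commute)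
  qed
  ultimately have Zd0: "Zd = 0" using noncol_perp[OF assms(1)] by blast
  have a2: "a\<^sup>2 = rr/4" using e1 Zd0 by simp
  define Hd where "Hd = (H - F) - (x + y + z)"
  have o1: "(H - A) \<bullet> (B - C) = 0" and o2: "(H - B) \<bullet> (C - A) = 0"
    using assms(6) by (auto simp: is_orthocenter_def)
  have HA: "H - A = Hd + (y + z)" and HB: "H - B = Hd + (x + z)" and HC: "H - C = Hd + (x + y)"
    by (simp_all add: Hd_def x_def y_def z_def algebra_simps)
  have BC: "B - C = y - z" and CA: "C - A = z - x" by (simp_all add: x_def y_def z_def)
  have h1: "Hd \<bullet> (B - C) = 0"
  proof -
    have "(Hd + (y + z)) \<bullet> (y - z) = Hd \<bullet> (y - z) + (y \<bullet> y - z \<bullet> z)"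
      unfolding inner2 by (simp add: algebra_simps)
    then show ?thesis using o1 HA BC yy zz by simp
  qed
  have h2: "Hd \<bullet> (C - A) = 0"
  proof -
    have "(Hd + (x + z)) \<bullet> (z - x) = Hd \<bullet> (z - x) + (z \<bullet> z - x \<bullet> x)"
      unfolding inner2 by (simp add: algebra_simps)
    then show ?thesis using o2 HB CA zz rr_def by simp
  qed
  have "Hd \<bullet> (B - A) = 0"
  proof -
    have "Hd \<bullet> (B - A) = Hd \<bullet> ((B - C) + (C - A))" by simp
    also have "\<dots> = Hd \<bullet> (B - C) + Hd \<bullet> (C - A)" by (rule inner_add_right)
    finally show ?thesis using h1 h2 by simp
  qed
  then have Hd0: "Hd = 0" using noncol_perp[OF assms(1)] h2 by blast
  define p1 where "p1 = y \<bullet> z"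
  define p2 where "p2 = z \<bullet> x"
  define p3 where "p3 = x \<bullet> y"
  have qb: "(if hyp then -1 else 1) * b\<^sup>2 = - (p1 + p2 + p3 + rr)/2"
  proof -
    have FM: "F - Ma = (-(1/2)) *\<^sub>R (y + z)" unfolding Ma_def y_def z_def by (simp add: vec_eq_iff field_simps)
    have ZM: "2 *\<^sub>R Z - F - Ma = (x + y + z) - (1/2) *\<^sub>R (y + z)"
    proof -
      have "Z - F = (1/2) *\<^sub>R (x + y + z)" using Zd0 Zd_def by simp
      then have Zeq: "Z = F + (1/2) *\<^sub>R (x + y + z)" by (metis add.commute diff_add_cancel)
      show ?thesis apply (subst Zeq) unfolding Ma_def y_def z_def x_def by (simp add: vec_eq_iff field_simps)
    qed
    have "((-(1/2)) *\<^sub>R (y + z)) \<bullet> ((x + y + z) - (1/2) *\<^sub>R (y + z))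
       = - (p3 + p2 + (y \<bullet> y + z \<bullet> z)/2 + p1)/2"
      unfolding p1_def p2_def p3_def inner2 by (simp add: algebra_simps power2_eq_square)
    then show ?thesis using ta(2) FM ZM yy zz by simp
  qed
  have b4: "(b\<^sup>2)\<^sup>2 = ((p1 + p2 + p3 + rr)/2)\<^sup>2"
  proof -
    have "(b\<^sup>2)\<^sup>2 = ((if hyp then -1 else 1) * b\<^sup>2)\<^sup>2" by simp
    also have "\<dots> = (- (p1 + p2 + p3 + rr)/2)\<^sup>2" by (simp only: qb)
    also have "\<dots> = ((p1 + p2 + p3 + rr)/2)\<^sup>2" by (simp add: power2_eq_square algebra_simps)
    finally show ?thesis .
  qed
  have nAH: "(dist A H)\<^sup>2 = 2*rr + 2*p1"
  proof -
    have dn: "dist A H = norm (H - A)" by (rule dist_commute[THEN trans, OF dist_norm])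
    have "H - A = y + z" using HA Hd0 by simp
    then have "(dist A H)\<^sup>2 = (y + z) \<bullet> (y + z)" unfolding dn by (simp only: power2_norm_eq_inner)
    also have "\<dots> = y \<bullet> y + z \<bullet> z + 2 * (y \<bullet> z)" unfolding inner2 by (simp add: algebra_simps)
    finally show ?thesis using yy zz p1_def by simp
  qed
  have nBH: "(dist B H)\<^sup>2 = 2*rr + 2*p2"
  proof -
    have dn: "dist B H = norm (H - B)" by (rule dist_commute[THEN trans, OF dist_norm])
    have "H - B = x + z" using HB Hd0 by simp
    then have "(dist B H)\<^sup>2 = (x + z) \<bullet> (x + z)" unfolding dn by (simp only: power2_norm_eq_inner)
    also have "\<dots> = x \<bullet> x + z \<bullet> z + 2 * (z \<bullet> x)" unfolding inner2 by (simp add: algebra_simps)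
    finally show ?thesis using rr_def zz p2_def by simp
  qed
  have nCH: "(dist C H)\<^sup>2 = 2*rr + 2*p3"
  proof -
    have dn: "dist C H = norm (H - C)" by (rule dist_commute[THEN trans, OF dist_norm])
    have "H - C = x + y" using HC Hd0 by simp
    then have "(dist C H)\<^sup>2 = (x + y) \<bullet> (x + y)" unfolding dn by (simp only: power2_norm_eq_inner)
    also have "\<dots> = x \<bullet> x + y \<bullet> y + 2 * (x \<bullet> y)" unfolding inner2 by (simp add: algebra_simps)
    finally show ?thesis using rr_def yy p3_def by simp
  qed
  have gr: "rr^3 + 2*p1*p2*p3 - rr*p1\<^sup>2 - rr*p2\<^sup>2 - rr*p3\<^sup>2 = 0"
  proof -
    have g0: "(x \<bullet> x) * (y \<bullet> y) * (z \<bullet> z) + 2 * (x \<bullet> y) * (y \<bullet> z) * (z \<bullet> x)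
    - (x \<bullet> x) * (y \<bullet> z)\<^sup>2 - (y \<bullet> y) * (z \<bullet> x)\<^sup>2 - (z \<bullet> z) * (x \<bullet> y)\<^sup>2 = 0" by (rule gram2)
    have g1: "rr*rr*rr + 2*p3*p1*p2 - rr*p1\<^sup>2 - rr*p2\<^sup>2 - rr*p3\<^sup>2 = 0"
      using g0 unfolding yy zz rr_def[symmetric] p1_def[symmetric] p2_def[symmetric] p3_def[symmetric] .
    have "rr^3 + 2*p1*p2*p3 - rr*p1\<^sup>2 - rr*p2\<^sup>2 - rr*p3\<^sup>2 = rr*rr*rr + 2*p3*p1*p2 - rr*p1\<^sup>2 - rr*p2\<^sup>2 - rr*p3\<^sup>2"
      by algebra
    then show ?thesis using g1 by simp
  qed
  have "(dist A H * dist B H * dist C H)\<^sup>2 = (8 * a * b\<^sup>2)\<^sup>2"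
  proof -
    have "(dist A H * dist B H * dist C H)\<^sup>2 = (dist A H)\<^sup>2 * (dist B H)\<^sup>2 * (dist C H)\<^sup>2"
      by (simp only: power_mult_distrib)
    also have "\<dots> = (2*rr+2*p1)*(2*rr+2*p2)*(2*rr+2*p3)"
      unfolding nAH nBH nCH ..
    also have "\<dots> = 16*rr*((p1+p2+p3+rr)/2)\<^sup>2" using final_alg[OF gr] .
    also have "\<dots> = 64 * a\<^sup>2 * (b\<^sup>2)\<^sup>2" unfolding a2 b4 by simp
    also have "\<dots> = (8 * a * b\<^sup>2)\<^sup>2" by (simp add: power_mult_distrib)
    finally show ?thesis .
  qed
  moreover have "0 \<le> dist A H * dist B H * dist C H" by simp
  moreover have "0 \<le> 8 * a * b\<^sup>2" using ab by simp
  ultimately show ?thesis by (rule power2_eq_imp_eq)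
qed

end
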